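(* Let $n\ge 3$ be odd. For any three distinct indices $i,j,k\in[n]$, in $R/J_n$ we have $x_{ij}\,p^+_{n,k}=x_{jk}\,p^+_{n,i}$.
   Context: Let $\mathbbm{k}$ be a field, $[n]=\{1,\dots,n\}$, $R=\mathbbm{k}[x_{ij}:1\le i\le j\le n]$ with $x_{ij}=x_{ji}$; exponent vectors in $\mathbb{N}^{\binom{n+1}{2}}$ with basis $e_{ij}=e_{ji}$. $V_n$ is the $n\times\binom{n+1}{2}$ matrix whose column indexed by $jk$ is $e_j+e_k\in\mathbb{Z}^n$; for $\mathbf b\in\mathbb{N}^n$, $V_n^{-1}[\mathbf b]=\{u\in\mathbb{N}^{\binom{n+1}{2}}:V_nu=\mathbf b\}$. $J_n$ is generated by the principal $2$-minors $x_{ii}x_{jj}-x_{ij}^2$. With $[ij|kl]:=e_{ik}+e_{jl}-e_{il}-e_{jk}$, $L'_n$ is the lattice generated by the $[ij|ij]$; two points of a fiber are equivalent if their difference lies in $L'_n$. For $n$ odd and $i\in[n]$, $p^+_{n,i}\in R/J_n$ is the sum of $x^{\mathbf a}$ over the equivalence classes $\mathbf a$ of $V_n^{-1}[(n-2,\dots,n-2)+e_i]$ modulo $L'_n$. *)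

theory Defs
  imports Main "HOL-Library.Poly_Mapping"
begin

text \<open>Variables x_ij (x_ij = x_ji) are indexed by normalized pairs (min i j, max i j).
Monomials: exponent vectors (nat \<times> nat) -0-> nat; the ring R = k[x_ij] is
((nat \<times> nat) -0-> nat) -0-> 'k.\<close>

type_synonym mono = "(nat \<times> nat, nat) poly_mapping"
type_synonym 'k spoly = "(mono, 'k) poly_mapping"

definition npair :: "nat \<Rightarrow> nat \<Rightarrow> nat \<times> nat" where
  "npair i j = (min i j, max i j)"

definition Pairs :: "nat \<Rightarrow> (nat \<times> nat) set" where
  "Pairs n = {(a, b). 1 \<le> a \<and> a \<le> b \<and> b \<le> n}"

definition xvar :: "nat \<Rightarrow> nat \<Rightarrow> 'k::comm_ring_1 spoly" where
  "xvar i j = Poly_Mapping.single (Poly_Mapping.single (npair i j) 1) 1"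

definition xmono :: "mono \<Rightarrow> 'k::comm_ring_1 spoly" where
  "xmono a = Poly_Mapping.single a 1"

definition in_J :: "nat \<Rightarrow> 'k::comm_ring_1 spoly \<Rightarrow> bool" where
  "in_J n f \<longleftrightarrow> (\<exists>q :: nat \<Rightarrow> nat \<Rightarrow> 'k spoly.
      f = (\<Sum>i\<in>{1..n}. \<Sum>j\<in>{1..n}. q i j * (xvar i i * xvar j j - xvar i j ^ 2)))"

definition eq_mod_J :: "nat \<Rightarrow> 'k::comm_ring_1 spoly \<Rightarrow> 'k spoly \<Rightarrow> bool" where
  "eq_mod_J n f g \<longleftrightarrow> in_J n (f - g)"

text \<open>Fiber V_n^{-1}[b]: exponent vectors supported on the variables with V_n u = b,
where column jk of V_n is e_j + e_k.\<close>
definition fiber :: "nat \<Rightarrow> (nat \<Rightarrow> nat) \<Rightarrow> mono set" where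
  "fiber n b = {u. Poly_Mapping.keys u \<subseteq> Pairs n \<and>
     (\<forall>l\<in>{1..n}. (\<Sum>p\<in>Pairs n. Poly_Mapping.lookup u p *
        ((if fst p = l then 1 else 0) + (if snd p = l then 1 else 0))) = b l)}"

definition bracket :: "nat \<Rightarrow> nat \<Rightarrow> (nat \<times> nat) \<Rightarrow> int" where
  "bracket i j p = (if p = npair i i then 1 else 0) + (if p = npair j j then 1 else 0)
      - (if p = npair i j then 1 else 0) - (if p = npair j i then 1 else 0)"

definition Lequiv :: "nat \<Rightarrow> mono \<Rightarrow> mono \<Rightarrow> bool" where
  "Lequiv n u v \<longleftrightarrow> (\<exists>c :: nat \<Rightarrow> nat \<Rightarrow> int. \<forall>p.
      int (Poly_Mapping.lookup u p) - int (Poly_Mapping.lookup v p) = (\<Sum>i\<in>{1..n}. \<Sum>j\<in>{1..n}. c i j * bracket i j p))"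

definition fiber_rel :: "nat \<Rightarrow> (nat \<Rightarrow> nat) \<Rightarrow> (mono \<times> mono) set" where
  "fiber_rel n b = {(u, v). u \<in> fiber n b \<and> v \<in> fiber n b \<and> Lequiv n u v}"

text \<open>p^+_{n,i}: sum of x^a over the classes a of V_n^{-1}[(n-2,..,n-2)+e_i] modulo L'_n,
one (arbitrary) representative per class.\<close>
definition p_plus :: "nat \<Rightarrow> nat \<Rightarrow> 'k::comm_ring_1 spoly" where
  "p_plus n i = (\<Sum>C\<in>fiber n (\<lambda>l. n - 2 + (if l = i then 1 else 0)) //
                      fiber_rel n (\<lambda>l. n - 2 + (if l = i then 1 else 0)).
                   xmono (SOME a. a \<in> C))"

end

theory Submission
  imports Defs
begin

definition gen :: "nat \<Rightarrow> nat \<Rightarrow> 'k::comm_ring_1 spoly" where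
  "gen i j = xvar i i * xvar j j - xvar i j ^ 2"

lemma in_J_0: "in_J n 0"
  unfolding in_J_def by (rule exI[of _ "\<lambda>i j. 0"]) simp

lemma in_J_add: assumes "in_J n f" "in_J n g" shows "in_J n (f + g)"
proof -
  obtain q where q: "f = (\<Sum>i\<in>{1..n}. \<Sum>j\<in>{1..n}. q i j * (xvar i i * xvar j j - xvar i j ^ 2))"
    using assms(1) unfolding in_J_def by blast
  obtain r where r: "g = (\<Sum>i\<in>{1..n}. \<Sum>j\<in>{1..n}. r i j * (xvar i i * xvar j j - xvar i j ^ 2))"
    using assms(2) unfolding in_J_def by blast
  show ?thesis unfolding in_J_def
    by (rule exI[of _ "\<lambda>i j. q i j + r i j"]) (simp add: q r distrib_right sum.distrib)
qed

lemma in_J_mult: assumes "in_J n f" shows "in_J n (h * f)"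
proof -
  obtain q where q: "f = (\<Sum>i\<in>{1..n}. \<Sum>j\<in>{1..n}. q i j * (xvar i i * xvar j j - xvar i j ^ 2))"
    using assms(1) unfolding in_J_def by blast
  show ?thesis unfolding in_J_def
    by (rule exI[of _ "\<lambda>i j. h * q i j"]) (simp add: q sum_distrib_left mult.assoc)
qed

lemma in_J_uminus: assumes "in_J n f" shows "in_J n (- f)"
  using in_J_mult[OF assms, of "-1"] by simp

lemma in_J_diff: assumes "in_J n f" "in_J n g" shows "in_J n (f - g)"
  using in_J_add[OF assms(1) in_J_uminus[OF assms(2)]] by simp

lemma in_J_sum: assumes "\<And>x. x \<in> A \<Longrightarrow> in_J n (f x)" shows "in_J n (sum f A)"
proof (cases "finite A")
  case True
  then show ?thesis using assms by (induction A rule: finite_induct) (auto intro: in_J_0 in_J_add)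
next
  case False then show ?thesis by (simp add: in_J_0)
qed

lemma in_J_gen: fixes n :: nat assumes "a \<in> {1..n}" "b \<in> {1..n}" shows "in_J n (gen a b :: 'k::comm_ring_1 spoly)"
proof -
  have "(\<Sum>i\<in>{1..n}. \<Sum>j\<in>{1..n}. (if i = a \<and> j = b then 1 else 0) * (xvar i i * xvar j j - xvar i j ^ 2))
     = (\<Sum>i\<in>{1..n}. if i = a then (xvar i i * xvar b b - xvar i b ^ 2) else 0)"
  proof (rule sum.cong[OF refl])
    fix i assume "i \<in> {1..n}"
    show "(\<Sum>j\<in>{1..n}. (if i = a \<and> j = b then 1 else 0) * (xvar i i * xvar j j - xvar i j ^ 2))
     = (if i = a then (xvar i i * xvar b b - xvar i b ^ 2) else 0)"
    proof (cases "i = a")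
      case True
      have "(\<Sum>j\<in>{1..n}. (if i = a \<and> j = b then 1 else 0) * (xvar i i * xvar j j - xvar i j ^ 2))
        = (if i = a \<and> b = b then 1 else 0) * (xvar i i * xvar b b - xvar i b ^ 2) +
          (\<Sum>j\<in>{1..n}-{b}. (if i = a \<and> j = b then 1 else 0) * (xvar i i * xvar j j - xvar i j ^ 2))"
        using assms by (intro sum.remove) auto
      also have "(\<Sum>j\<in>{1..n}-{b}. (if i = a \<and> j = b then 1 else 0) * (xvar i i * xvar j j - xvar i j ^ 2)) = 0"
        by (rule sum.neutral) auto
      finally show ?thesis using True by simp
    qed simp
  qed
  also have "\<dots> = gen a b" using assms by (simp add: gen_def)
  finally show ?thesis unfolding in_J_def by (intro exI[of _ "\<lambda>i j. if i = a \<and> j = b then 1 else 0"]) (rule sym)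
qed

lemma eqJ_refl: "eq_mod_J n f f" by (simp add: eq_mod_J_def in_J_0)
lemma eqJ_sym: "eq_mod_J n f g \<Longrightarrow> eq_mod_J n g f"
  unfolding eq_mod_J_def using in_J_uminus by fastforce
lemma eqJ_trans: "eq_mod_J n f g \<Longrightarrow> eq_mod_J n g h \<Longrightarrow> eq_mod_J n f h"
  unfolding eq_mod_J_def using in_J_add by fastforce
lemma eqJ_mult: "eq_mod_J n f g \<Longrightarrow> eq_mod_J n (h * f) (h * g)"
  unfolding eq_mod_J_def using in_J_mult by (fastforce simp: right_diff_distrib)
lemma eqJ_sum: "(\<And>x. x \<in> A \<Longrightarrow> eq_mod_J n (f x) (g x)) \<Longrightarrow> eq_mod_J n (sum f A) (sum g A)"
  unfolding eq_mod_J_def using in_J_sum[of A n "\<lambda>x. f x - g x"] by (simp add: sum_subtractf)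

lemma finite_Pairs: "finite (Pairs n)"
proof -
  have "Pairs n \<subseteq> {1..n} \<times> {1..n}" by (auto simp: Pairs_def)
  then show ?thesis by (rule finite_subset) simp
qed

definition Wsum :: "nat \<Rightarrow> (nat \<times> nat \<Rightarrow> nat) \<Rightarrow> mono \<Rightarrow> nat" where
  "Wsum n f u = (\<Sum>p\<in>Pairs n. Poly_Mapping.lookup u p * f p)"

definition wt :: "nat \<times> nat \<Rightarrow> nat \<Rightarrow> nat" where
  "wt p l = (if fst p = l then 1 else 0) + (if snd p = l then 1 else 0)"

definition offw :: "nat \<times> nat \<Rightarrow> nat" where
  "offw p = (if fst p \<noteq> snd p then 1 else 0)"

lemma fiber_iff: "u \<in> fiber n b \<longleftrightarrow> Poly_Mapping.keys u \<subseteq> Pairs n \<and> (\<forall>l\<in>{1..n}. Wsum n (\<lambda>p. wt p l) u = b l)"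
  unfolding fiber_def Wsum_def wt_def by simp

lemma Wsum_add: "Wsum n f (u + v) = Wsum n f u + Wsum n f v"
  unfolding Wsum_def by (simp add: lookup_add distrib_right sum.distrib)

lemma Wsum_single: assumes "q \<in> Pairs n" shows "Wsum n f (Poly_Mapping.single q m) = m * f q"
proof -
  have "Wsum n f (Poly_Mapping.single q m) = (\<Sum>p\<in>Pairs n. if p = q then m * f q else 0)"
    unfolding Wsum_def by (rule sum.cong) (auto simp: lookup_single when_def)
  also have "\<dots> = m * f q" using assms finite_Pairs by (simp add: sum.delta')
  finally show ?thesis .
qed

lemma wt_npair: "a \<noteq> b \<Longrightarrow> wt (npair a b) l = (if a = l then 1 else 0) + (if b = l then 1 else 0)"
  unfolding wt_def npair_def by (auto simp: min_def max_def)

lemma wt_diag: "wt (a, a) l = 2 * (if a = l then 1 else 0)"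
  unfolding wt_def by simp

lemma npair_Pairs: "a \<in> {1..n} \<Longrightarrow> b \<in> {1..n} \<Longrightarrow> npair a b \<in> Pairs n"
  unfolding npair_def Pairs_def by auto

lemma npair_diag: "npair a a = (a, a)" by (simp add: npair_def)

lemma keys_sub_iff: "Poly_Mapping.keys u \<subseteq> Pairs n \<longleftrightarrow> (\<forall>q. q \<notin> Pairs n \<longrightarrow> Poly_Mapping.lookup u q = 0)"
  by (auto simp: in_keys_iff)

lemma Lequiv_refl: "Lequiv n u u"
  unfolding Lequiv_def by (rule exI[of _ "\<lambda>i j. 0"]) simp

lemma Lequiv_sym: assumes "Lequiv n u v" shows "Lequiv n v u"
proof -
  obtain c where c: "\<And>p. int (Poly_Mapping.lookup u p) - int (Poly_Mapping.lookup v p) = (\<Sum>i\<in>{1..n}. \<Sum>j\<in>{1..n}. c i j * bracket i j p)"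
    using assms unfolding Lequiv_def by blast
  show ?thesis unfolding Lequiv_def
  proof (rule exI[of _ "\<lambda>i j. - c i j"], intro allI)
    fix p
    show "int (Poly_Mapping.lookup v p) - int (Poly_Mapping.lookup u p) = (\<Sum>i\<in>{1..n}. \<Sum>j\<in>{1..n}. - c i j * bracket i j p)"
      using c[of p] by (simp add: sum_negf)
  qed
qed

lemma Lequiv_trans: assumes "Lequiv n u v" "Lequiv n v w" shows "Lequiv n u w"
proof -
  obtain c where c: "\<And>p. int (Poly_Mapping.lookup u p) - int (Poly_Mapping.lookup v p) = (\<Sum>i\<in>{1..n}. \<Sum>j\<in>{1..n}. c i j * bracket i j p)"
    using assms(1) unfolding Lequiv_def by blast
  obtain d where d: "\<And>p. int (Poly_Mapping.lookup v p) - int (Poly_Mapping.lookup w p) = (\<Sum>i\<in>{1..n}. \<Sum>j\<in>{1..n}. d i j * bracket i j p)"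
    using assms(2) unfolding Lequiv_def by blast
  show ?thesis unfolding Lequiv_def
  proof (rule exI[of _ "\<lambda>i j. c i j + d i j"], intro allI)
    fix p
    show "int (Poly_Mapping.lookup u p) - int (Poly_Mapping.lookup w p) = (\<Sum>i\<in>{1..n}. \<Sum>j\<in>{1..n}. (c i j + d i j) * bracket i j p)"
      using c[of p] d[of p] by (simp add: distrib_right sum.distrib)
  qed
qed

lemma double_delta:
  assumes "a \<in> A" "b \<in> B" "finite A" "finite B"
  shows "(\<Sum>i\<in>A. \<Sum>j\<in>B. (if i = a \<and> j = b then x else 0) * F i j) = (x * F a b :: 'a::comm_ring_1)"
proof -
  have "(\<Sum>i\<in>A. \<Sum>j\<in>B. (if i = a \<and> j = b then x else 0) * F i j) = (\<Sum>i\<in>A. if i = a then x * F a b else 0)"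
  proof (rule sum.cong[OF refl])
    fix i assume "i \<in> A"
    have "(\<Sum>j\<in>B. (if i = a \<and> j = b then x else 0) * F i j) = (\<Sum>j\<in>B. if j = b then (if i = a then x * F a b else 0) else 0)"
      by (rule sum.cong) auto
    also have "\<dots> = (if i = a then x * F a b else 0)" using assms by (simp only: sum.delta) simp
    finally show "(\<Sum>j\<in>B. (if i = a \<and> j = b then x else 0) * F i j) = (if i = a then x * F a b else 0)" .
  qed
  also have "\<dots> = x * F a b" using assms by (simp only: sum.delta) simp
  finally show ?thesis .
qed

lemma bracket_even: assumes "fst q \<noteq> snd q" shows "even (bracket i j q)"
  using assms unfolding bracket_def npair_def by (auto simp: min_def max_def)

definition reduced :: "nat \<Rightarrow> mono \<Rightarrow> bool" where
  "reduced n r \<longleftrightarrow> (\<forall>p\<in>Pairs n. fst p \<noteq> snd p \<longrightarrow> Poly_Mapping.lookup r p \<le> 1)"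

definition Rset :: "nat \<Rightarrow> (nat \<Rightarrow> nat) \<Rightarrow> mono set" where
  "Rset n d = {r \<in> fiber n d. reduced n r}"

lemma reduced_unique:
  assumes r: "r \<in> Rset n d" and s: "s \<in> Rset n d" and L: "Lequiv n r s"
  shows "r = s"
proof -
  obtain c where c: "\<And>p. int (Poly_Mapping.lookup r p) - int (Poly_Mapping.lookup s p) = (\<Sum>i\<in>{1..n}. \<Sum>j\<in>{1..n}. c i j * bracket i j p)"
    using L unfolding Lequiv_def by blast
  have kr: "Poly_Mapping.keys r \<subseteq> Pairs n" and ks: "Poly_Mapping.keys s \<subseteq> Pairs n"
    and Vr: "\<And>l. l \<in> {1..n} \<Longrightarrow> Wsum n (\<lambda>p. wt p l) r = d l"
    and Vs: "\<And>l. l \<in> {1..n} \<Longrightarrow> Wsum n (\<lambda>p. wt p l) s = d l"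
    and rr: "reduced n r" and rs: "reduced n s"
    using r s by (auto simp: Rset_def fiber_iff)
  have off: "Poly_Mapping.lookup r q = Poly_Mapping.lookup s q" if q: "q \<in> Pairs n" "fst q \<noteq> snd q" for q
  proof -
    have "even (int (Poly_Mapping.lookup r q) - int (Poly_Mapping.lookup s q))"
      unfolding c by (intro dvd_sum dvd_mult bracket_even q(2))
    moreover have "Poly_Mapping.lookup r q \<le> 1" "Poly_Mapping.lookup s q \<le> 1" using rr rs q unfolding reduced_def by auto
    ultimately show ?thesis by presburger
  qed
  have diag: "Poly_Mapping.lookup r (l, l) = Poly_Mapping.lookup s (l, l)" if l: "l \<in> {1..n}" for l
  proof -
    have lP: "(l, l) \<in> Pairs n" using l by (auto simp: Pairs_def)
    have rest: "(\<Sum>p\<in>Pairs n - {(l,l)}. Poly_Mapping.lookup r p * wt p l) = (\<Sum>p\<in>Pairs n - {(l,l)}. Poly_Mapping.lookup s p * wt p l)"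
    proof (rule sum.cong[OF refl])
      fix p assume p: "p \<in> Pairs n - {(l, l)}"
      show "Poly_Mapping.lookup r p * wt p l = Poly_Mapping.lookup s p * wt p l"
      proof (cases "fst p = snd p")
        case True
        then have "wt p l = 0" using p by (cases p) (auto simp: wt_def)
        then show ?thesis by simp
      qed (use off p in auto)
    qed
    have "Wsum n (\<lambda>p. wt p l) r = Poly_Mapping.lookup r (l,l) * 2 + (\<Sum>p\<in>Pairs n - {(l,l)}. Poly_Mapping.lookup r p * wt p l)"
      unfolding Wsum_def using lP finite_Pairs by (simp add: sum.remove wt_def)
    moreover have "Wsum n (\<lambda>p. wt p l) s = Poly_Mapping.lookup s (l,l) * 2 + (\<Sum>p\<in>Pairs n - {(l,l)}. Poly_Mapping.lookup s p * wt p l)"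
      unfolding Wsum_def using lP finite_Pairs by (simp add: sum.remove wt_def)
    ultimately show ?thesis using Vr[OF l] Vs[OF l] rest by simp
  qed
  show ?thesis
  proof (rule poly_mapping_eqI)
    fix q
    show "Poly_Mapping.lookup r q = Poly_Mapping.lookup s q"
    proof (cases "q \<in> Pairs n")
      case True
      show ?thesis
      proof (cases "fst q = snd q")
        case True
        then obtain l where "q = (l, l)" by (cases q) auto
        moreover have "l \<in> {1..n}" using \<open>q \<in> Pairs n\<close> calculation by (auto simp: Pairs_def)
        ultimately show ?thesis using diag by simp
      qed (use off True in auto)
    next
      case False
      then show ?thesis using kr ks by (metis in_keys_iff subsetD)
    qed
  qed
qed

lemma xmono_add: "xmono (a + b) = (xmono a * xmono b :: 'k::comm_ring_1 spoly)"
  unfolding xmono_def by (simp add: mult_single)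

lemma xvar_xmono: "xvar i j = (xmono (Poly_Mapping.single (npair i j) 1) :: 'k::comm_ring_1 spoly)"
  unfolding xvar_def xmono_def by simp

lemma xvar_sq: "xvar i j ^ 2 = (xmono (Poly_Mapping.single (npair i j) 2) :: 'k::comm_ring_1 spoly)"
proof -
  have "xvar i j ^ 2 = (xmono (Poly_Mapping.single (npair i j) 1 + Poly_Mapping.single (npair i j) 1) :: 'k spoly)"
    by (simp add: power2_eq_square xvar_xmono xmono_add)
  also have "Poly_Mapping.single (npair i j) 1 + Poly_Mapping.single (npair i j) 1 = Poly_Mapping.single (npair i j) (2::nat)"
    by (metis one_add_one single_add)
  finally show ?thesis .
qed

section \<open>Reduction\<close>

lemma reduce_exists:
  fixes u :: mono
  assumes "Poly_Mapping.keys u \<subseteq> Pairs n"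
  shows "\<exists>r. reduced n r \<and> Poly_Mapping.keys r \<subseteq> Pairs n \<and>
    (\<forall>l. Wsum n (\<lambda>p. wt p l) r = Wsum n (\<lambda>p. wt p l) u) \<and> Lequiv n u r \<and>
    eq_mod_J n (xmono u :: 'k::comm_ring_1 spoly) (xmono r)"
  using assms
proof (induction "Wsum n offw u" arbitrary: u rule: less_induct)
  case less
  show ?case
  proof (cases "reduced n u")
    case True
    then show ?thesis using less.prems by (intro exI[of _ u]) (auto simp: Lequiv_refl eqJ_refl)
  next
    case False
    then obtain p where pP: "p \<in> Pairs n" and poff: "fst p \<noteq> snd p" and p2: "Poly_Mapping.lookup u p \<ge> 2"
      unfolding reduced_def by force
    obtain a b where pab: "p = (a, b)" by (cases p)
    have ab: "a < b" "a \<in> {1..n}" "b \<in> {1..n}" using pP poff pab by (auto simp: Pairs_def)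
    have np: "npair a b = p" "npair b a = p" "npair a a = (a,a)" "npair b b = (b,b)"
      using ab pab by (auto simp: npair_def)
    have aaP: "(a,a) \<in> Pairs n" and bbP: "(b,b) \<in> Pairs n" using ab by (auto simp: Pairs_def)
    define t where "t = u - Poly_Mapping.single p 2"
    have lt: "Poly_Mapping.lookup t q = Poly_Mapping.lookup u q - (if q = p then 2 else 0)" for q
      unfolding t_def by (auto simp: lookup_minus lookup_single when_def)
    have u_eq: "u = t + Poly_Mapping.single p 2"
      by (rule poly_mapping_eqI) (use p2 in \<open>auto simp: lookup_add lt lookup_single when_def\<close>)
    have lu: "Poly_Mapping.lookup u q = Poly_Mapping.lookup t q + (if q = p then 2 else 0)" for q
      by (subst u_eq) (auto simp: lookup_add lookup_single when_def)
    define u' where "u' = t + Poly_Mapping.single (a,a) 1 + Poly_Mapping.single (b,b) 1"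
    have kt: "Poly_Mapping.keys t \<subseteq> Pairs n"
      using less.prems by (auto simp: keys_sub_iff lt)
    have ku': "Poly_Mapping.keys u' \<subseteq> Pairs n"
      using kt aaP bbP unfolding u'_def keys_sub_iff
      by (auto simp: lookup_add lookup_single when_def)
    have W: "Wsum n f u = Wsum n f t + 2 * f p" "Wsum n f u' = Wsum n f t + f (a,a) + f (b,b)" for f
      using pP aaP bbP by (simp_all add: u_eq u'_def Wsum_add Wsum_single)
    have "Wsum n offw u' < Wsum n offw u"
      using W[of offw] poff by (simp add: offw_def)
    from less.hyps[OF this ku'] obtain r where r: "reduced n r" "Poly_Mapping.keys r \<subseteq> Pairs n"
      "\<forall>l. Wsum n (\<lambda>p. wt p l) r = Wsum n (\<lambda>p. wt p l) u'" "Lequiv n u' r"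
      "eq_mod_J n (xmono u' :: 'k spoly) (xmono r)" by blast
    have V: "Wsum n (\<lambda>p. wt p l) u' = Wsum n (\<lambda>p. wt p l) u" for l
      using W[of "\<lambda>p. wt p l"] ab unfolding wt_diag by (simp add: wt_npair flip: np(1))
    have L: "Lequiv n u u'"
      unfolding Lequiv_def
    proof (rule exI[of _ "\<lambda>i j. if i = a \<and> j = b then -1 else 0"], intro allI)
      fix q
      have "(\<Sum>i\<in>{1..n}. \<Sum>j\<in>{1..n}. (if i = a \<and> j = b then -1 else 0) * bracket i j q) = - bracket a b q"
        using ab by (subst double_delta) auto
      also have "\<dots> = int (Poly_Mapping.lookup u q) - int (Poly_Mapping.lookup u' q)"
        unfolding bracket_def np using ab pab lu[of q] by (auto simp: u'_def lookup_add lookup_single when_def)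
      finally show "int (Poly_Mapping.lookup u q) - int (Poly_Mapping.lookup u' q) =
          (\<Sum>i\<in>{1..n}. \<Sum>j\<in>{1..n}. (if i = a \<and> j = b then -1 else 0) * bracket i j q)" by simp
    qed
    have E: "eq_mod_J n (xmono u :: 'k spoly) (xmono u')"
    proof -
      have "(xmono u :: 'k spoly) - xmono u' = - (xmono t * gen a b)"
        unfolding gen_def u'_def
        by (subst u_eq, simp only: xvar_sq) (simp add: xmono_add xvar_xmono np algebra_simps)
      then show ?thesis unfolding eq_mod_J_def
        using in_J_uminus[OF in_J_mult[OF in_J_gen[OF ab(2,3)]]] by metis
    qed
    show ?thesis
    proof (intro exI[of _ r] conjI allI)
      show "Lequiv n u r" using Lequiv_trans[OF L r(4)] .
      show "eq_mod_J n (xmono u :: 'k spoly) (xmono r)" using eqJ_trans[OF E r(5)] .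
      fix l show "Wsum n (\<lambda>p. wt p l) r = Wsum n (\<lambda>p. wt p l) u" using r(3) V by simp
    qed (use r in auto)
  qed
qed

section \<open>p_plus as a sum over reduced monomials\<close>

lemma equiv_fiber_rel: "equiv (fiber n d) (fiber_rel n d)"
  unfolding equiv_def refl_on_def sym_def trans_def fiber_rel_def
proof (intro conjI allI impI)
  fix x y z assume "(x, y) \<in> {(u, v). u \<in> fiber n d \<and> v \<in> fiber n d \<and> Lequiv n u v}"
    "(y, z) \<in> {(u, v). u \<in> fiber n d \<and> v \<in> fiber n d \<and> Lequiv n u v}"
  then show "(x, z) \<in> {(u, v). u \<in> fiber n d \<and> v \<in> fiber n d \<and> Lequiv n u v}"
    using Lequiv_trans[of n x y z] by simp
qed (auto simp: Lequiv_refl Lequiv_sym)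

lemma pplus_red:
  "eq_mod_J n ((\<Sum>C\<in>fiber n d // fiber_rel n d. xmono (SOME a. a \<in> C)) :: 'k::comm_ring_1 spoly)
     (\<Sum>r\<in>Rset n d. xmono r)"
proof -
  let ?F = "fiber n d" and ?rel = "fiber_rel n d"
  let ?Q = "?F // ?rel"
  have eqv: "equiv ?F ?rel" by (rule equiv_fiber_rel)
  have "\<forall>u\<in>?F. \<exists>r. reduced n r \<and> Poly_Mapping.keys r \<subseteq> Pairs n \<and>
    (\<forall>l. Wsum n (\<lambda>p. wt p l) r = Wsum n (\<lambda>p. wt p l) u) \<and> Lequiv n u r \<and>
    eq_mod_J n (xmono u :: 'k spoly) (xmono r)"
    using reduce_exists by (auto simp: fiber_iff)
  then obtain g where g: "\<And>u. u \<in> ?F \<Longrightarrow> reduced n (g u) \<and> Poly_Mapping.keys (g u) \<subseteq> Pairs n \<and>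
    (\<forall>l. Wsum n (\<lambda>p. wt p l) (g u) = Wsum n (\<lambda>p. wt p l) u) \<and> Lequiv n u (g u) \<and>
    eq_mod_J n (xmono u :: 'k spoly) (xmono (g u))"
    by metis
  have gR: "g u \<in> Rset n d" if "u \<in> ?F" for u
    using g[OF that] that by (auto simp: Rset_def fiber_iff)
  have someC: "(SOME a. a \<in> C) \<in> C" "(SOME a. a \<in> C) \<in> ?F" if "C \<in> ?Q" for C
  proof -
    have "C \<noteq> {}" using in_quotient_imp_non_empty[OF eqv that] .
    then show "(SOME a. a \<in> C) \<in> C" by (simp add: some_in_eq)
    then show "(SOME a. a \<in> C) \<in> ?F" using in_quotient_imp_subset[OF eqv that] by blast
  qed
  define h where "h C = g (SOME a. a \<in> C)" for C
  have step1: "eq_mod_J n ((\<Sum>C\<in>?Q. xmono (SOME a. a \<in> C)) :: 'k spoly) (\<Sum>C\<in>?Q. xmono (h C))"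
    unfolding h_def by (rule eqJ_sum) (use g someC in blast)
  have bij: "bij_betw h ?Q (Rset n d)"
    unfolding bij_betw_def
  proof (intro conjI)
    show "inj_on h ?Q"
    proof (rule inj_onI)
      fix C C' assume C: "C \<in> ?Q" and C': "C' \<in> ?Q" and e: "h C = h C'"
      let ?a = "SOME a. a \<in> C" and ?a' = "SOME a. a \<in> C'"
      have l1: "Lequiv n ?a (g ?a)" and l2: "Lequiv n ?a' (g ?a')" using g someC C C' by blast+
      have "g ?a = g ?a'" using e unfolding h_def .
      then have "Lequiv n (g ?a) ?a'" using Lequiv_sym[OF l2] by simp
      then have "Lequiv n ?a ?a'" using Lequiv_trans[OF l1] by blast
      then have "(?a, ?a') \<in> ?rel" using someC C C' by (auto simp: fiber_rel_def)
      then show "C = C'" using quotient_eq_iff[OF eqv C C' someC(1)[OF C] someC(1)[OF C']] by simp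
    qed
    show "h ` ?Q = Rset n d"
    proof
      show "h ` ?Q \<subseteq> Rset n d" unfolding h_def using gR someC by blast
      show "Rset n d \<subseteq> h ` ?Q"
      proof
        fix r assume r: "r \<in> Rset n d"
        then have rF: "r \<in> ?F" by (simp add: Rset_def)
        define C where "C = ?rel `` {r}"
        have CQ: "C \<in> ?Q" unfolding C_def using rF by (rule quotientI)
        let ?a = "SOME a. a \<in> C"
        have "(r, ?a) \<in> ?rel" using someC(1)[OF CQ] unfolding C_def by simp
        then have "Lequiv n r ?a" by (simp add: fiber_rel_def)
        moreover have "Lequiv n ?a (g ?a)" using g someC CQ by blast
        ultimately have "Lequiv n r (g ?a)" by (rule Lequiv_trans)
        then have "r = g ?a" using reduced_unique[OF r gR[OF someC(2)[OF CQ]]] by blast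
        then show "r \<in> h ` ?Q" unfolding h_def using CQ by blast
      qed
    qed
  qed
  have "(\<Sum>C\<in>?Q. xmono (h C)) = (\<Sum>r\<in>Rset n d. xmono r :: 'k spoly)"
    by (rule sum.reindex_bij_betw[OF bij])
  then show ?thesis using step1 by simp
qed

section \<open>Multiplying by a variable\<close>

lemma lookup_single_if: "Poly_Mapping.lookup (Poly_Mapping.single k v) q = (if k = q then v else 0)"
  by (simp add: lookup_single when_def)

lemma W_split:
  assumes "(l, l) \<in> Pairs n"
  shows "Wsum n (\<lambda>p. wt p l) s = Poly_Mapping.lookup s (l,l) * 2 + (\<Sum>p\<in>Pairs n - {(l,l)}. Poly_Mapping.lookup s p * wt p l)"
  unfolding Wsum_def using assms finite_Pairs by (simp add: sum.remove wt_def)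

lemma diag_pos:
  assumes s: "s \<in> Rset n c" and ab: "a \<in> {1..n}" "b \<in> {1..n}" "a \<noteq> b"
    and s0: "Poly_Mapping.lookup s (npair a b) = 0" and ca: "c a = n - 1" and n3: "n \<ge> 3"
  shows "Poly_Mapping.lookup s (a, a) \<ge> 1"
proof -
  have aP: "(a, a) \<in> Pairs n" using ab by (auto simp: Pairs_def)
  have red: "reduced n s" and V: "Wsum n (\<lambda>p. wt p a) s = c a" using s ab by (auto simp: Rset_def fiber_iff)
  let ?A = "Pairs n - {(a,a)}"
  define S where "S = {q \<in> ?A. wt q a \<noteq> 0 \<and> q \<noteq> npair a b}"
  have fA: "finite ?A" using finite_Pairs by simp
  have tm: "Poly_Mapping.lookup s q * wt q a \<le> (if q \<in> S then 1 else 0)" if q: "q \<in> ?A" for q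
  proof (cases "q \<in> S")
    case True
    obtain x y where qxy: "q = (x, y)" by (cases q)
    have off: "x \<noteq> y" using True qxy unfolding S_def wt_def by auto
    have "wt q a = 1" using True qxy off unfolding S_def wt_def by (auto split: if_splits)
    moreover have "Poly_Mapping.lookup s q \<le> 1" using red q off qxy unfolding reduced_def by auto
    ultimately show ?thesis using True by simp
  next
    case False
    then have "wt q a = 0 \<or> q = npair a b" using q unfolding S_def by auto
    then show ?thesis using s0 False by auto
  qed
  have "(\<Sum>q\<in>?A. Poly_Mapping.lookup s q * wt q a) \<le> (\<Sum>q\<in>?A. if q \<in> S then 1 else 0)"
    by (rule sum_mono) (rule tm)
  also have "\<dots> = card S"
  proof -
    have "(\<Sum>q\<in>?A. if q \<in> S then 1 else 0) = (\<Sum>q\<in>{q \<in> ?A. q \<in> S}. 1::nat)"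
      by (simp only: sum.inter_filter[OF fA])
    also have "{q \<in> ?A. q \<in> S} = S" unfolding S_def by auto
    finally show ?thesis by simp
  qed
  also have "card S \<le> n - 2"
  proof -
    have "S \<subseteq> (\<lambda>l. npair a l) ` ({1..n} - {a, b})"
    proof
      fix q assume q: "q \<in> S"
      obtain x y where qxy: "q = (x, y)" by (cases q)
      have xy: "1 \<le> x" "x \<le> y" "y \<le> n" using q qxy unfolding S_def Pairs_def by auto
      have axy: "a = x \<or> a = y" using q qxy unfolding S_def wt_def by (auto split: if_splits)
      define l where "l = (if x = a then y else x)"
      have ql: "q = npair a l" using axy xy qxy unfolding l_def npair_def by auto
      have "l \<in> {1..n}" using xy unfolding l_def by auto
      moreover have "l \<noteq> a" using q ql unfolding S_def by (auto simp: npair_def)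
      moreover have "l \<noteq> b" using q ql unfolding S_def by auto
      ultimately show "q \<in> (\<lambda>l. npair a l) ` ({1..n} - {a, b})" using ql by blast
    qed
    then have "card S \<le> card ((\<lambda>l. npair a l) ` ({1..n} - {a, b}))"
      by (rule card_mono[rotated]) simp
    also have "\<dots> \<le> card ({1..n} - {a, b})" by (rule card_image_le) simp
    also have "\<dots> = n - 2" using ab by (subst card_Diff_subset) auto
    finally show ?thesis .
  qed
  finally have "(\<Sum>q\<in>?A. Poly_Mapping.lookup s q * wt q a) \<le> n - 2" .
  then show ?thesis using V W_split[OF aP, of s] ca n3 by linarith
qed


lemma mult_var:
  fixes a b n :: nat and c d :: "nat \<Rightarrow> nat"
  assumes ab: "a \<in> {1..n}" "b \<in> {1..n}" "a \<noteq> b" and n3: "n \<ge> 3"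
    and cd: "\<And>l. l \<in> {1..n} \<Longrightarrow> c l = d l + (if a = l then 1 else 0) + (if b = l then 1 else 0)"
    and ca: "c a = n - 1" and cb: "c b = n - 1"
  shows "eq_mod_J n (xvar a b * (\<Sum>r\<in>Rset n d. xmono r) :: 'k::comm_ring_1 spoly) (\<Sum>s\<in>Rset n c. xmono s)"
proof -
  define p where "p = npair a b"
  have pP: "p \<in> Pairs n" unfolding p_def using ab by (simp add: npair_Pairs)
  have aP: "(a,a) \<in> Pairs n" and bP: "(b,b) \<in> Pairs n" using ab by (auto simp: Pairs_def)
  have pne: "p \<noteq> (a,a)" "p \<noteq> (b,b)" "(a,a) \<noteq> (b,b)" "fst p \<noteq> snd p"
    using ab unfolding p_def npair_def by (auto simp: min_def max_def)
  have pba: "npair b a = p" unfolding p_def npair_def by (auto simp: min_def max_def)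
  define ep where "ep = Poly_Mapping.single p (1::nat)"
  define ea where "ea = Poly_Mapping.single (a,a) (1::nat)"
  define eb where "eb = Poly_Mapping.single (b,b) (1::nat)"
  define \<phi> where "\<phi> r = (if Poly_Mapping.lookup r p = 0 then r + ep else r - ep + ea + eb)" for r
  define \<psi> where "\<psi> s = (if Poly_Mapping.lookup s p = 1 then s - ep else s + ep - ea - eb)" for s
  have wtp: "wt p l = (if a = l then 1 else 0) + (if b = l then 1 else 0)" for l
    unfolding p_def using ab by (simp add: wt_npair)
  have Wp: "Wsum n f ep = f p" "Wsum n f ea = f (a,a)" "Wsum n f eb = f (b,b)" for f
    unfolding ep_def ea_def eb_def using pP aP bP by (simp_all add: Wsum_single)
  have lk: "Poly_Mapping.lookup ep q = (if q = p then 1 else 0)"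
    "Poly_Mapping.lookup ea q = (if q = (a,a) then 1 else 0)"
    "Poly_Mapping.lookup eb q = (if q = (b,b) then 1 else 0)" for q
    unfolding ep_def ea_def eb_def by (auto simp: lookup_single_if)
  have dec1: "r = (r - ep) + ep" if "Poly_Mapping.lookup r p \<noteq> 0" for r
    by (rule poly_mapping_eqI) (use that in \<open>auto simp: lookup_add lookup_minus lk\<close>)
  have dec2: "(s + ep - ea - eb) + ea + eb = s + ep" if "Poly_Mapping.lookup s (a,a) \<ge> 1" "Poly_Mapping.lookup s (b,b) \<ge> 1" for s
    by (rule poly_mapping_eqI) (use that pne in \<open>auto simp: lookup_add lookup_minus lk\<close>)
  have keys_ok: "Poly_Mapping.keys u \<subseteq> Pairs n" if "\<And>q. q \<notin> Pairs n \<Longrightarrow> Poly_Mapping.lookup u q = 0" for u :: mono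
    using that by (auto simp: keys_sub_iff)
  have Rd: "Poly_Mapping.keys r \<subseteq> Pairs n" "reduced n r" "\<And>l. l \<in> {1..n} \<Longrightarrow> Wsum n (\<lambda>q. wt q l) r = d l"
    if "r \<in> Rset n d" for r using that by (auto simp: Rset_def fiber_iff)
  have Rc: "Poly_Mapping.keys s \<subseteq> Pairs n" "reduced n s" "\<And>l. l \<in> {1..n} \<Longrightarrow> Wsum n (\<lambda>q. wt q l) s = c l"
    if "s \<in> Rset n c" for s using that by (auto simp: Rset_def fiber_iff)
  have out0: "Poly_Mapping.lookup u q = 0" if "Poly_Mapping.keys u \<subseteq> Pairs n" "q \<notin> Pairs n" for u :: mono and q
    using that by (metis in_keys_iff subsetD)
  have red1: "Poly_Mapping.lookup u p \<le> 1" if "reduced n u" for u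
    using that pP pne unfolding reduced_def by auto
  have phiR: "\<phi> r \<in> Rset n c" if r: "r \<in> Rset n d" for r
  proof (cases "Poly_Mapping.lookup r p = 0")
    case True
    then have e: "\<phi> r = r + ep" unfolding \<phi>_def by simp
    have "Poly_Mapping.keys (\<phi> r) \<subseteq> Pairs n"
      by (rule keys_ok) (use out0[OF Rd(1)[OF r]] pP in \<open>auto simp: e lookup_add lk\<close>)
    moreover have "reduced n (\<phi> r)" using Rd(2)[OF r] True unfolding reduced_def
      by (auto simp: e lookup_add lk)
    moreover have "Wsum n (\<lambda>q. wt q l) (\<phi> r) = c l" if "l \<in> {1..n}" for l
      using Rd(3)[OF r that] cd[OF that] by (simp add: e Wsum_add Wp wtp)
    ultimately show ?thesis by (auto simp: Rset_def fiber_iff)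
  next
    case False
    have r1: "Poly_Mapping.lookup r p = 1" using False red1[OF Rd(2)[OF r]] by simp
    have e: "\<phi> r = (r - ep) + ea + eb" unfolding \<phi>_def using False by simp
    have "Poly_Mapping.keys (\<phi> r) \<subseteq> Pairs n"
      by (rule keys_ok) (use out0[OF Rd(1)[OF r]] aP bP in \<open>auto simp: e lookup_add lookup_minus lk\<close>)
    moreover have "reduced n (\<phi> r)" using Rd(2)[OF r] r1 unfolding reduced_def
      by (auto simp: e lookup_add lookup_minus lk)
    moreover have "Wsum n (\<lambda>q. wt q l) (\<phi> r) = c l" if "l \<in> {1..n}" for l
    proof -
      have "Wsum n (\<lambda>q. wt q l) r = Wsum n (\<lambda>q. wt q l) (r - ep) + wt p l"
        by (subst dec1[OF False]) (simp add: Wsum_add Wp)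
      then show ?thesis using Rd(3)[OF r that] cd[OF that]
        by (simp add: e Wsum_add Wp wtp wt_diag)
    qed
    ultimately show ?thesis by (auto simp: Rset_def fiber_iff)
  qed
  have diag_a: "Poly_Mapping.lookup s (a,a) \<ge> 1" and diag_b: "Poly_Mapping.lookup s (b,b) \<ge> 1"
    if s: "s \<in> Rset n c" "Poly_Mapping.lookup s p \<noteq> 1" for s
  proof -
    have s0: "Poly_Mapping.lookup s p = 0" using s red1[OF Rc(2)[OF s(1)]] by simp
    show "Poly_Mapping.lookup s (a,a) \<ge> 1"
      by (rule diag_pos[OF s(1) ab]) (use s0 p_def ca n3 in auto)
    show "Poly_Mapping.lookup s (b,b) \<ge> 1"
      by (rule diag_pos[OF s(1) ab(2,1) ab(3)[symmetric]]) (use s0 pba cb n3 in auto)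
  qed
  have psiR: "\<psi> s \<in> Rset n d" if s: "s \<in> Rset n c" for s
  proof (cases "Poly_Mapping.lookup s p = 1")
    case True
    then have e: "\<psi> s = s - ep" unfolding \<psi>_def by simp
    have "Poly_Mapping.keys (\<psi> s) \<subseteq> Pairs n"
      by (rule keys_ok) (use out0[OF Rc(1)[OF s]] in \<open>auto simp: e lookup_minus lk\<close>)
    moreover have "reduced n (\<psi> s)" using Rc(2)[OF s] unfolding reduced_def
      by (auto simp: e lookup_minus lk)
    moreover have "Wsum n (\<lambda>q. wt q l) (\<psi> s) = d l" if "l \<in> {1..n}" for l
    proof -
      have "Wsum n (\<lambda>q. wt q l) s = Wsum n (\<lambda>q. wt q l) (s - ep) + wt p l"
        by (subst dec1) (use True in \<open>simp_all add: Wsum_add Wp\<close>)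
      then show ?thesis using Rc(3)[OF s that] cd[OF that] by (simp add: e wtp)
    qed
    ultimately show ?thesis by (auto simp: Rset_def fiber_iff)
  next
    case False
    have s0: "Poly_Mapping.lookup s p = 0" using False red1[OF Rc(2)[OF s]] by simp
    have e: "\<psi> s = s + ep - ea - eb" unfolding \<psi>_def using False by simp
    have "Poly_Mapping.keys (\<psi> s) \<subseteq> Pairs n"
      by (rule keys_ok) (use out0[OF Rc(1)[OF s]] pP in \<open>auto simp: e lookup_add lookup_minus lk\<close>)
    moreover have "reduced n (\<psi> s)" using Rc(2)[OF s] s0 unfolding reduced_def
      by (auto simp: e lookup_add lookup_minus lk)
    moreover have "Wsum n (\<lambda>q. wt q l) (\<psi> s) = d l" if "l \<in> {1..n}" for l
    proof -
      have "Wsum n (\<lambda>q. wt q l) (\<psi> s) + wt (a,a) l + wt (b,b) l = Wsum n (\<lambda>q. wt q l) s + wt p l"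
        using dec2[OF diag_a[OF s False] diag_b[OF s False]] unfolding e
        by (metis Wsum_add Wp)
      then show ?thesis using Rc(3)[OF s that] cd[OF that] by (simp add: wtp wt_diag)
    qed
    ultimately show ?thesis by (auto simp: Rset_def fiber_iff)
  qed
  have psiphi: "\<psi> (\<phi> r) = r" if r: "r \<in> Rset n d" for r
  proof (cases "Poly_Mapping.lookup r p = 0")
    case True
    then have "Poly_Mapping.lookup (\<phi> r) p = 1" unfolding \<phi>_def by (simp add: lookup_add lk)
    then show ?thesis unfolding \<psi>_def using True unfolding \<phi>_def
      by (intro poly_mapping_eqI) (auto simp: lookup_add lookup_minus lk)
  next
    case False
    have r1: "Poly_Mapping.lookup r p = 1" using False red1[OF Rd(2)[OF r]] by simp
    then have "Poly_Mapping.lookup (\<phi> r) p = 0" unfolding \<phi>_def using pne by (simp add: lookup_add lookup_minus lk)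
    then show ?thesis unfolding \<psi>_def using False r1 pne unfolding \<phi>_def
      by (intro poly_mapping_eqI) (auto simp: lookup_add lookup_minus lk)
  qed
  have phipsi: "\<phi> (\<psi> s) = s" if s: "s \<in> Rset n c" for s
  proof (cases "Poly_Mapping.lookup s p = 1")
    case True
    then have "Poly_Mapping.lookup (\<psi> s) p = 0" unfolding \<psi>_def by (simp add: lookup_minus lk)
    then show ?thesis unfolding \<phi>_def using True unfolding \<psi>_def
      by (intro poly_mapping_eqI) (auto simp: lookup_add lookup_minus lk)
  next
    case False
    have s0: "Poly_Mapping.lookup s p = 0" using False red1[OF Rc(2)[OF s]] by simp
    have da: "Poly_Mapping.lookup s (a,a) \<ge> 1" and db: "Poly_Mapping.lookup s (b,b) \<ge> 1"
      using diag_a[OF s False] diag_b[OF s False] by auto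
    have "Poly_Mapping.lookup (\<psi> s) p = 1" unfolding \<psi>_def using False s0 pne by (simp add: lookup_add lookup_minus lk)
    then show ?thesis unfolding \<phi>_def using False s0 pne da db unfolding \<psi>_def
      by (intro poly_mapping_eqI) (auto simp: lookup_add lookup_minus lk)
  qed
  have xmon: "eq_mod_J n (xvar a b * xmono r :: 'k spoly) (xmono (\<phi> r))" for r
  proof (cases "Poly_Mapping.lookup r p = 0")
    case True
    then have "(xvar a b * xmono r :: 'k spoly) = xmono (\<phi> r)"
      unfolding \<phi>_def by (simp add: xvar_xmono xmono_add p_def ep_def mult.commute)
    then show ?thesis by (simp add: eqJ_refl)
  next
    case False
    let ?t = "r - ep"
    have "(xvar a b * xmono r :: 'k spoly) - xmono (\<phi> r) = - (xmono ?t * gen a b)"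
    proof -
      have "(xvar a b * xmono r :: 'k spoly) = xmono ?t * xvar a b ^ 2"
        by (subst dec1[OF False]) (simp add: xmono_add power2_eq_square xvar_xmono p_def ep_def)
      moreover have "(xmono (\<phi> r) :: 'k spoly) = xmono ?t * (xvar a a * xvar b b)"
        unfolding \<phi>_def using False by (simp add: xmono_add xvar_xmono npair_diag ea_def eb_def)
      ultimately show ?thesis unfolding gen_def by (simp add: algebra_simps)
    qed
    then show ?thesis unfolding eq_mod_J_def
      using in_J_uminus[OF in_J_mult[OF in_J_gen[OF ab(1,2)]]] by metis
  qed
  have "(xvar a b * (\<Sum>r\<in>Rset n d. xmono r) :: 'k spoly) = (\<Sum>r\<in>Rset n d. xvar a b * xmono r)"
    by (simp add: sum_distrib_left)
  moreover have "eq_mod_J n ((\<Sum>r\<in>Rset n d. xvar a b * xmono r) :: 'k spoly) (\<Sum>r\<in>Rset n d. xmono (\<phi> r))"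
    by (rule eqJ_sum) (rule xmon)
  moreover have "(\<Sum>r\<in>Rset n d. xmono (\<phi> r)) = (\<Sum>s\<in>Rset n c. xmono s :: 'k spoly)"
    by (rule sum.reindex_bij_witness[where i = \<psi> and j = \<phi>]) (auto simp: psiphi phiR phipsi psiR)
  ultimately show ?thesis by simp
qed



theorem lemma2p18:
  fixes n i j k :: nat
  assumes "n \<ge> 3" and "odd n"
    and "i \<in> {1..n}" and "j \<in> {1..n}" and "k \<in> {1..n}"
    and "i \<noteq> j" and "j \<noteq> k" and "i \<noteq> k"
  shows "eq_mod_J n (xvar i j * p_plus n k :: 'k::field spoly) (xvar j k * p_plus n i)"
proof -
  define bk where "bk = (\<lambda>l. n - 2 + (if l = k then 1 else (0::nat)))"
  define bi where "bi = (\<lambda>l. n - 2 + (if l = i then 1 else (0::nat)))"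
  define c where "c = (\<lambda>l. n - 2 + (if l = i then 1 else 0) + (if l = j then 1 else 0) + (if l = k then 1 else (0::nat)))"
  have pk: "eq_mod_J n (p_plus n k :: 'k spoly) (\<Sum>r\<in>Rset n bk. xmono r)"
    unfolding p_plus_def bk_def by (rule pplus_red)
  have pi: "eq_mod_J n (p_plus n i :: 'k spoly) (\<Sum>r\<in>Rset n bi. xmono r)"
    unfolding p_plus_def bi_def by (rule pplus_red)
  have g1: "eq_mod_J n (xvar i j * (\<Sum>r\<in>Rset n bk. xmono r) :: 'k spoly) (\<Sum>s\<in>Rset n c. xmono s)"
    by (rule mult_var) (use assms in \<open>auto simp: bk_def c_def\<close>)
  have g2: "eq_mod_J n (xvar j k * (\<Sum>r\<in>Rset n bi. xmono r) :: 'k spoly) (\<Sum>s\<in>Rset n c. xmono s)"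
    by (rule mult_var) (use assms in \<open>auto simp: bi_def c_def\<close>)
  have h1: "eq_mod_J n (xvar i j * p_plus n k :: 'k spoly) (xvar i j * (\<Sum>r\<in>Rset n bk. xmono r))"
    by (rule eqJ_mult[OF pk])
  have h2: "eq_mod_J n (xvar j k * (\<Sum>r\<in>Rset n bi. xmono r) :: 'k spoly) (xvar j k * p_plus n i)"
    by (rule eqJ_mult[OF eqJ_sym[OF pi]])
  show ?thesis by (rule eqJ_trans[OF eqJ_trans[OF h1 g1] eqJ_trans[OF eqJ_sym[OF g2] h2]])
qed


end
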